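(* Let $K$ and $K'$ be oriented virtual knot diagrams related by a finite sequence of classical Reidemeister II and III moves and virtual Reidemeister moves (including the mixed move), i.e. all classical and virtual Reidemeister moves except the classical Reidemeister I move. Then $\gamma(K)=\gamma(K')$ and $\bar\gamma(K)=\bar\gamma(K')$.
   Context: A virtual knot diagram is an immersion of one circle in the plane with classical crossings (over/under information) and virtual crossings; virtual knots are equivalence classes under classical and virtual Reidemeister moves. Fix an orientation. Each classical crossing $c$ has a sign $sgn(c)\in\{\pm1\}$ (the usual right-hand rule sign). For a classical crossing $c$ of $K$, let $K_c$ be the two-component oriented virtual link diagram obtained by smoothing $c$ in the orientation-respecting way (the "vertical smoothing"), with inherited orientation. Let $L(K_c)$ be the sum of the signs of all classical crossings of $K_c$ at which the two strands belong to different components (no division by two), and $\bar L(K_c)=L(K_c) \bmod 2\in\{0,1\}$. Define $\gamma(K)=\sum_{c} t^{\bar L(K_c)}\,sgn(c)$, the sum over all classical crossings of $K$; this is an element $a+bt$ of the free $\mathbb{Z}$-module on $\{1,t\}$. Define $\bar\gamma(K)=\gamma(K) \bmod 2$, i.e. $\gamma(K)$ with coefficients reduced modulo $2$. *)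

theory Defs
  imports "HOL-Computational_Algebra.Polynomial"
begin

text \<open>Virtual knot diagrams up to virtual Reidemeister moves (including the mixed move)
are encoded by their signed Gauss diagrams: a cyclic Gauss word whose letters are
(crossing label, True = over-passage / False = under-passage), together with a sign
function on crossing labels.  The word is read along the fixed orientation; its
starting point is irrelevant (rotation is one of the generating moves below).\<close>

type_synonym gword = "(nat \<times> bool) list"
type_synonym gdiag = "gword \<times> (nat \<Rightarrow> int)"

definition labels :: "gword \<Rightarrow> nat set" where
  "labels w = fst ` set w"

definition wf_gdiag :: "gdiag \<Rightarrow> bool" where
  "wf_gdiag K \<longleftrightarrow> (\<forall>l \<in> labels (fst K).
      length (filter (\<lambda>x. x = (l, True)) (fst K)) = 1 \<and>
      length (filter (\<lambda>x. x = (l, False)) (fst K)) = 1 \<and>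
      snd K l \<in> {1, -1})"

text \<open>Vertical (oriented) smoothing at crossing c: the two components of K_c are the
two arcs of the Gauss circle between the two passages through c.\<close>

definition cpos :: "gword \<Rightarrow> nat \<Rightarrow> nat set" where
  "cpos w c = {k. k < length w \<and> fst (w ! k) = c}"

definition smooth_comp1 :: "gword \<Rightarrow> nat \<Rightarrow> gword" where
  "smooth_comp1 w c = take (Max (cpos w c) - Min (cpos w c) - 1) (drop (Min (cpos w c) + 1) w)"

definition smooth_comp2 :: "gword \<Rightarrow> nat \<Rightarrow> gword" where
  "smooth_comp2 w c = drop (Max (cpos w c) + 1) w @ take (Min (cpos w c)) w"

text \<open>L(K_c): sum of signs of the crossings of K_c between the two components
(no division by two).\<close>

definition Lk :: "gdiag \<Rightarrow> nat \<Rightarrow> int" where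
  "Lk K c = (\<Sum>d \<in> labels (smooth_comp1 (fst K) c) \<inter> labels (smooth_comp2 (fst K) c). snd K d)"

definition Lbar :: "gdiag \<Rightarrow> nat \<Rightarrow> nat" where
  "Lbar K c = nat (Lk K c mod 2)"

definition gamma :: "gdiag \<Rightarrow> int poly" where
  "gamma K = (\<Sum>c \<in> labels (fst K). monom (snd K c) (Lbar K c))"

definition gammabar :: "gdiag \<Rightarrow> int poly" where
  "gammabar K = map_poly (\<lambda>x. x mod 2) (gamma K)"

definition rotate_move :: "gdiag \<Rightarrow> gdiag \<Rightarrow> bool" where
  "rotate_move K K' \<longleftrightarrow> (\<exists>u v. fst K = u @ v \<and> fst K' = v @ u \<and> snd K' = snd K)"

text \<open>Renaming crossings (the Gauss diagram is the same; includes changing the sign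
function away from the actual crossings).\<close>
definition relabel_move :: "gdiag \<Rightarrow> gdiag \<Rightarrow> bool" where
  "relabel_move K K' \<longleftrightarrow> (\<exists>f. inj_on f (labels (fst K)) \<and>
      fst K' = map (\<lambda>(l, ov). (f l, ov)) (fst K) \<and>
      (\<forall>l \<in> labels (fst K). snd K' (f l) = snd K l))"

text \<open>Classical Reidemeister II move creating two crossings x, y (of opposite signs)
where one strand passes over another one twice; the two strands may have equal or
opposite orientations.\<close>
definition R2_move :: "gdiag \<Rightarrow> gdiag \<Rightarrow> bool" where
  "R2_move K K' \<longleftrightarrow> (\<exists>p q r x y.
      x \<noteq> y \<and> x \<notin> labels (fst K) \<and> y \<notin> labels (fst K) \<and>
      fst K = p @ q @ r \<and>
      (fst K' = p @ [(x, True), (y, True)] @ q @ [(x, False), (y, False)] @ r \<or>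
       fst K' = p @ [(x, True), (y, True)] @ q @ [(y, False), (x, False)] @ r) \<and>
      (\<forall>l \<in> labels (fst K). snd K' l = snd K l) \<and>
      snd K' x \<in> {1, -1} \<and> snd K' y = - snd K' x)"

text \<open>The three strands are top (T), middle (M) and
bottom (B); crossing a is T over M, b is T over B, c is M over B.  A local configuration of three (straight, oriented) strands is
realizable in the plane iff there is lam in {1,-1} such that the passages along T are in
the order a,b iff lam * sgn c = 1, along M in the order a,c iff lam * sgn b = 1, and along
B in the order b,c iff lam * sgn a = 1; the move changes lam to -lam.\<close>
definition R3_config :: "(nat \<Rightarrow> int) \<Rightarrow> nat \<Rightarrow> nat \<Rightarrow> nat \<Rightarrow> gword \<Rightarrow> gword \<Rightarrow> gword \<Rightarrow> bool" where
  "R3_config s a b c PT PM PB \<longleftrightarrow>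
     (PT = [(a, True), (b, True)] \<or> PT = [(b, True), (a, True)]) \<and>
     (PM = [(a, False), (c, True)] \<or> PM = [(c, True), (a, False)]) \<and>
     (PB = [(b, False), (c, False)] \<or> PB = [(c, False), (b, False)]) \<and>
     (\<exists>lam \<in> {1, -1::int}.
        (PT = [(a, True), (b, True)] \<longleftrightarrow> lam * s c = 1) \<and>
        (PM = [(a, False), (c, True)] \<longleftrightarrow> lam * s b = 1) \<and>
        (PB = [(b, False), (c, False)] \<longleftrightarrow> lam * s a = 1))"

definition R3_move :: "gdiag \<Rightarrow> gdiag \<Rightarrow> bool" where
  "R3_move K K' \<longleftrightarrow> (\<exists>a b c PT PM PB p1 p2 p3 p4.
      a \<noteq> b \<and> a \<noteq> c \<and> b \<noteq> c \<and> R3_config (snd K) a b c PT PM PB \<and> snd K' = snd K \<and>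
      ((fst K = p1 @ PT @ p2 @ PM @ p3 @ PB @ p4 \<and>
        fst K' = p1 @ rev PT @ p2 @ rev PM @ p3 @ rev PB @ p4) \<or>
       (fst K = p1 @ PT @ p2 @ PB @ p3 @ PM @ p4 \<and>
        fst K' = p1 @ rev PT @ p2 @ rev PB @ p3 @ rev PM @ p4)))"

text \<open>One move (in either direction): virtual moves (which do not change the Gauss
diagram), classical R2 and R3; classical R1 is excluded.\<close>
definition no_R1_step :: "gdiag \<Rightarrow> gdiag \<Rightarrow> bool" where
  "no_R1_step K K' \<longleftrightarrow> rotate_move K K' \<or> relabel_move K K' \<or>
     R2_move K K' \<or> R2_move K' K \<or> R3_move K K' \<or> R3_move K' K"

end

theory Submission
  imports Defs
begin

definition cnt :: "nat \<Rightarrow> gword \<Rightarrow> nat" where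
  "cnt c xs = length (filter (\<lambda>x. fst x = c) xs)"

lemma cnt_Nil[simp]: "cnt c [] = 0" by (simp add: cnt_def)
lemma cnt_Cons[simp]: "cnt c (x#xs) = (if fst x = c then Suc (cnt c xs) else cnt c xs)"
  by (simp add: cnt_def)
lemma cnt_append[simp]: "cnt c (xs @ ys) = cnt c xs + cnt c ys" by (simp add: cnt_def)
lemma cnt_rev[simp]: "cnt c (rev xs) = cnt c xs" by (induction xs) auto

lemma labels_Nil[simp]: "labels [] = {}" by (simp add: labels_def)
lemma labels_Cons[simp]: "labels (x#xs) = insert (fst x) (labels xs)" by (simp add: labels_def)
lemma labels_append[simp]: "labels (xs @ ys) = labels xs \<union> labels ys" by (simp add: labels_def image_Un)
lemma labels_rev[simp]: "labels (rev xs) = labels xs" by (simp add: labels_def)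
lemma finite_labels[simp]: "finite (labels xs)" by (simp add: labels_def)

lemma cnt_zero_iff: "cnt c xs = 0 \<longleftrightarrow> c \<notin> labels xs"
  by (induction xs) auto

fun ps :: "gword \<Rightarrow> nat \<Rightarrow> nat" where
  "ps [] c = 0"
| "ps (x#xs) c = ps xs c + cnt c xs"

lemma ps_append: "ps (xs @ ys) c = ps xs c + ps ys c + length xs * cnt c ys"
  by (induction xs) auto

lemma ps_zero: "cnt c xs = 0 \<Longrightarrow> ps xs c = 0"
  by (induction xs) (auto split: if_splits)

lemma cnt_split: "cnt c xs = length (filter (\<lambda>x. x = (c, True)) xs) + length (filter (\<lambda>x. x = (c, False)) xs)"
  by (induction xs) auto

lemma cnt_wf: "wf_gdiag K \<Longrightarrow> c \<in> labels (fst K) \<Longrightarrow> cnt c (fst K) = 2"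
  unfolding wf_gdiag_def using cnt_split by auto

lemma length_sum: "length xs = (\<Sum>d\<in>labels xs. cnt d xs)"
proof (induction xs)
  case Nil then show ?case by simp
next
  case (Cons x xs)
  show ?case
  proof (cases "fst x \<in> labels xs")
    case True
    then have "(\<Sum>d\<in>labels (x#xs). cnt d (x#xs)) = (\<Sum>d\<in>labels xs. cnt d xs + (if fst x = d then 1 else 0))"
      by (auto intro: sum.cong)
    also have "\<dots> = (\<Sum>d\<in>labels xs. cnt d xs) + 1" using True by (simp add: sum.distrib)
    finally show ?thesis using Cons by simp
  next
    case False
    then have "(\<Sum>d\<in>labels (x#xs). cnt d (x#xs)) = cnt (fst x) (x#xs) + (\<Sum>d\<in>labels xs. cnt d (x#xs))"
      by simp
    also have "(\<Sum>d\<in>labels xs. cnt d (x#xs)) = (\<Sum>d\<in>labels xs. cnt d xs)"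
      using False by (intro sum.cong) auto
    also have "cnt (fst x) (x#xs) = 1" using False cnt_zero_iff by simp
    finally show ?thesis using Cons by simp
  qed
qed

lemma sum_pm1_mod:
  assumes "finite S" "\<forall>d\<in>S. f d \<in> {1, -1::int}"
  shows "(\<Sum>d\<in>S. f d) mod 2 = int (card S) mod 2"
  using assms
proof (induction S rule: finite_induct)
  case empty then show ?case by simp
next
  case (insert x F)
  then have h: "(\<Sum>d\<in>F. f d) mod 2 = int (card F) mod 2" and fx: "f x = 1 \<or> f x = -1" by auto
  have "(\<Sum>d\<in>insert x F. f d) = f x + (\<Sum>d\<in>F. f d)" using insert by simp
  moreover have "int (card (insert x F)) = int (card F) + 1" using insert by simp
  moreover have "(f x + (\<Sum>d\<in>F. f d)) mod 2 = (f x + int (card F)) mod 2" by (metis h mod_add_right_eq)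
  ultimately show ?case using fx by (auto; presburger)
qed

lemma gap_parity: "((j::nat)-i-1) mod 2 = (i+j+1) mod 2" if h: "i<j"
proof -
  obtain k where "j = Suc (i + k)" using h by (auto simp: less_iff_Suc_add)
  then have eqs: "j - i - 1 = k" "i + j + 1 = 2 * (i+1) + k" by simp_all
  have e: "(2*(i+1)+k) mod 2 = k mod 2" by simp
  show ?thesis by (simp only: eqs e)
qed

lemma lbar_ps:
  assumes wf: "wf_gdiag K" and cl: "c \<in> labels (fst K)"
  shows "Lbar K c = (ps (fst K) c + 1) mod 2"
proof -
  define w where "w = fst K"
  have c2: "cnt c w = 2" using cnt_wf[OF wf cl] w_def by simp
  have "card (cpos w c) = 2" using c2 by (simp add: cnt_def cpos_def length_filter_conv_card)
  then obtain i j where ij: "cpos w c = {i,j}" "i < j"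
    by (metis card_2_iff insert_commute linorder_neqE_nat)
  have "i \<in> cpos w c" "j \<in> cpos w c" using ij by auto
  then have ijl: "i < length w" "j < length w" "fst (w!i) = c" "fst (w!j) = c"
    by (simp_all add: cpos_def)
  have mm: "Min (cpos w c) = i" "Max (cpos w c) = j" using ij by auto
  define u where "u = take (j-i-1) (drop (i+1) w)"
  define al where "al = take i w"
  define be where "be = drop (j+1) w"
  have dd: "drop (j - i - 1) (drop (Suc i) w) = drop j w" using ij by (simp add: add.commute)
  have dec: "w = al @ [w!i] @ u @ [w!j] @ be"
  proof -
    have "w = take i w @ w!i # drop (Suc i) w" using ijl by (simp add: id_take_nth_drop)
    also have "drop (Suc i) w = u @ drop (j-i-1) (drop (Suc i) w)" unfolding u_def by (simp del: drop_drop)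
    also have "drop (j-i-1) (drop (Suc i) w) = w!j # be" unfolding dd be_def using ijl
      by (simp add: Cons_nth_drop_Suc)
    finally show ?thesis by (simp add: al_def)
  qed
  have lu: "length u = j-i-1" using ijl ij unfolding u_def by simp
  have la: "length al = i" using ijl unfolding al_def by simp
  have comp1: "smooth_comp1 (fst K) c = u"
    by (simp add: smooth_comp1_def mm u_def flip: w_def)
  have comp2: "smooth_comp2 (fst K) c = be @ al"
    by (simp add: smooth_comp2_def mm be_def al_def flip: w_def)
  have "cnt c w = cnt c al + 1 + cnt c u + 1 + cnt c be"
    using ijl by (subst dec) simp
  then have cz: "cnt c al = 0" "cnt c u = 0" "cnt c be = 0" using c2 by auto
  have psw: "ps w c = i + j"
  proof -
    have "ps w c = ps (al @ [w!i] @ u @ [w!j] @ be) c" using dec by simp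
    also have "\<dots> = j - i - 1 + 1 + 2 * i"
      using cz ijl la lu by (simp add: ps_append ps_zero)
    finally show ?thesis using ij by simp
  qed
  define S where "S = labels u \<inter> labels (be @ al)"
  have Lk: "Lk K c = (\<Sum>d\<in>S. snd K d)" by (simp add: Lk_def comp1 comp2 S_def)
  have lw: "labels w = labels al \<union> {c} \<union> labels u \<union> labels be"
    using ijl by (subst dec) auto
  have sg: "\<forall>d\<in>S. snd K d \<in> {1, -1}"
    using wf lw unfolding wf_gdiag_def S_def w_def by auto
  have cardp: "Lk K c mod 2 = int (card S) mod 2"
    using sum_pm1_mod[OF _ sg] Lk S_def by simp
  have cu: "cnt d u = (if d \<in> S then 1 else 2)" if d: "d \<in> labels u" for d
  proof -
    have dc: "d \<noteq> c" using d cz cnt_zero_iff by auto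
    have "d \<in> labels w" using lw d by auto
    then have "cnt d w = 2" using cnt_wf[OF wf] w_def by simp
    moreover have "cnt d w = cnt d al + cnt d u + cnt d be" using ijl dc by (subst dec) simp
    moreover have "cnt d u \<noteq> 0" using d cnt_zero_iff by auto
    moreover have "d \<in> S \<longleftrightarrow> cnt d al + cnt d be \<noteq> 0" using d cnt_zero_iff[of d al] cnt_zero_iff[of d be]
      unfolding S_def by auto
    ultimately show ?thesis by auto
  qed
  have "length u = (\<Sum>d\<in>labels u. cnt d u)" by (rule length_sum)
  also have "\<dots> = (\<Sum>d\<in>labels u. if d \<in> S then 1 else 2)" using cu by (intro sum.cong) auto
  also have "\<dots> = card S + 2 * card (labels u - S)"
  proof -
    have e: "labels u \<inter> S = S" "labels u \<inter> - S = labels u - S" by (auto simp: S_def)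
    show ?thesis by (simp add: sum.If_cases e)
  qed
  finally have lp: "length u mod 2 = card S mod 2" by simp
  have "Lbar K c = nat (int (card S) mod 2)" using cardp by (simp add: Lbar_def)
  also have "\<dots> = card S mod 2" by (simp add: nat_mod_as_int)
  also have "\<dots> = (ps w c + 1) mod 2"
  proof -
    have e: "(j-i-1) mod 2 = (i+j+1) mod 2" using \<open>i < j\<close> by (rule gap_parity)
    show ?thesis using lp lu psw e by simp
  qed
  finally show ?thesis by (simp add: w_def)
qed


definition G :: "gword \<Rightarrow> (nat \<Rightarrow> int) \<Rightarrow> int poly" where
  "G w s = (\<Sum>c\<in>labels w. monom (s c) ((ps w c + 1) mod 2))"

lemma gamma_G: "wf_gdiag K \<Longrightarrow> gamma K = G (fst K) (snd K)"
  unfolding gamma_def G_def by (intro sum.cong) (auto simp: lbar_ps)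

lemma par_lemma: "(a::nat) + b = 2 * X + E \<Longrightarrow> even E \<Longrightarrow> (a + 1) mod 2 = (b + 1) mod 2"
  by presburger

lemma length_filter_rev[simp]: "length (filter P (rev xs)) = length (filter P xs)"
  by (simp flip: rev_filter)

lemma wf_length_even: "wf_gdiag K \<Longrightarrow> even (length (fst K))"
proof -
  assume wf: "wf_gdiag K"
  have "length (fst K) = (\<Sum>d\<in>labels (fst K). cnt d (fst K))" by (rule length_sum)
  also have "\<dots> = (\<Sum>d\<in>labels (fst K). 2)" using cnt_wf[OF wf] by (intro sum.cong) auto
  finally show ?thesis by simp
qed

lemma rot_par: "(cu::nat) + cv = 2 \<Longrightarrow> even (lu + lv) \<Longrightarrow> (lv * cu) mod 2 = (lu * cv) mod 2"
proof -
  assume a: "cu + cv = 2" "even (lu + lv)"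
  then have "cu = 0 \<and> cv = 2 \<or> cu = 1 \<and> cv = 1 \<or> cu = 2 \<and> cv = 0" by auto
  then show ?thesis using a(2) by (elim disjE) (auto, presburger)
qed

lemma rotate_ok:
  assumes wf: "wf_gdiag K" and m: "rotate_move K K'"
  shows "wf_gdiag K' \<and> G (fst K) (snd K) = G (fst K') (snd K')"
proof -
  obtain u v where uv: "fst K = u @ v" "fst K' = v @ u" "snd K' = snd K" using m unfolding rotate_move_def by auto
  have "wf_gdiag K'" using wf uv unfolding wf_gdiag_def by (simp add: add.commute Un_commute)
  moreover have "G (u@v) (snd K) = G (v@u) (snd K)"
    unfolding G_def
  proof (intro sum.cong)
    show "labels (u @ v) = labels (v @ u)" by auto
  next
    fix c assume c: "c \<in> labels (v @ u)"
    have "cnt c u + cnt c v = 2" using cnt_wf[OF wf, of c] c uv by auto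
    moreover have "even (length u + length v)" using wf_length_even[OF wf] uv by simp
    ultimately have e: "(length v * cnt c u) mod 2 = (length u * cnt c v) mod 2" by (rule rot_par)
    have "ps (u@v) c = ps u c + ps v c + length u * cnt c v" by (simp add: ps_append)
    moreover have "ps (v@u) c = ps v c + ps u c + length v * cnt c u" by (simp add: ps_append)
    ultimately have "(ps (u@v) c + 1) mod 2 = (ps (v@u) c + 1) mod 2"
      using e by (metis add.commute add.left_commute mod_add_right_eq)
    then show "monom (snd K c) ((ps (u @ v) c + 1) mod 2) = monom (snd K c) ((ps (v @ u) c + 1) mod 2)"
      by simp
  qed
  ultimately show ?thesis using uv by simp
qed

lemma len_filter_map_eq: "\<forall>x\<in>set w. P (g x) = Q x \<Longrightarrow> length (filter P (map g w)) = length (filter Q w)"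
  by (induction w) auto

lemma ps_map: "\<forall>x\<in>set w. (fst (g x) = d) = (fst x = c) \<Longrightarrow> ps (map g w) d = ps w c"
proof (induction w)
  case Nil then show ?case by simp
next
  case (Cons a w)
  have "cnt d (map g w) = cnt c w" unfolding cnt_def using Cons.prems by (intro len_filter_map_eq) auto
  then show ?case using Cons by simp
qed

lemma relabel_ok:
  assumes wf: "wf_gdiag K" and m: "relabel_move K K'"
  shows "wf_gdiag K' \<and> G (fst K) (snd K) = G (fst K') (snd K')"
proof -
  obtain f where f: "inj_on f (labels (fst K))"
    "fst K' = map (\<lambda>(l, ov). (f l, ov)) (fst K)" "\<forall>l \<in> labels (fst K). snd K' (f l) = snd K l"
    using m unfolding relabel_move_def by auto
  define g :: "nat \<times> bool \<Rightarrow> nat \<times> bool" where "g = (\<lambda>(l, ov). (f l, ov))"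
  define w where "w = fst K"
  have w': "fst K' = map g w" using f by (simp add: g_def w_def)
  have fg: "fst (g x) = f (fst x)" for x by (cases x) (simp add: g_def)
  have lab: "labels (map g w) = f ` labels w" by (simp add: labels_def image_image fg)
  have key: "\<forall>x\<in>set w. (fst (g x) = f l) = (fst x = l)" if l: "l \<in> labels w" for l
  proof
    fix x assume "x \<in> set w"
    then have "fst x \<in> labels w" by (simp add: labels_def)
    then show "(fst (g x) = f l) = (fst x = l)" using f(1) l by (auto simp: fg w_def dest: inj_onD)
  qed
  have key2: "\<forall>x\<in>set w. (g x = (f l, b)) = (x = (l, b))" if l: "l \<in> labels w" for l b
  proof
    fix x assume "x \<in> set w"
    then have "fst x \<in> labels w" by (simp add: labels_def)
    then show "(g x = (f l, b)) = (x = (l, b))" using f(1) l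
      by (cases x) (auto simp: g_def w_def dest: inj_onD)
  qed
  have "wf_gdiag K'"
    unfolding wf_gdiag_def w' lab
  proof
    fix l' assume "l' \<in> f ` labels w"
    then obtain l where l: "l \<in> labels w" "l' = f l" by auto
    have "length (filter (\<lambda>x. x = (l', b)) (map g w)) = length (filter (\<lambda>x. x = (l, b)) w)" for b
      using key2[OF l(1)] l(2) by (intro len_filter_map_eq) auto
    then show "length (filter (\<lambda>x. x = (l', True)) (map g w)) = 1 \<and>
          length (filter (\<lambda>x. x = (l', False)) (map g w)) = 1 \<and> snd K' l' \<in> {1, - 1}"
      using wf l f(3) unfolding wf_gdiag_def w_def by auto
  qed
  moreover have "G w (snd K) = G (fst K') (snd K')"
  proof -
    have "G (fst K') (snd K') = (\<Sum>c\<in>f ` labels w. monom (snd K' c) ((ps (map g w) c + 1) mod 2))"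
      unfolding G_def w' lab ..
    also have "\<dots> = (\<Sum>l\<in>labels w. monom (snd K' (f l)) ((ps (map g w) (f l) + 1) mod 2))"
      using f(1) by (simp add: sum.reindex w_def)
    also have "\<dots> = (\<Sum>l\<in>labels w. monom (snd K l) ((ps w l + 1) mod 2))"
    proof (intro sum.cong refl)
      fix l assume l: "l \<in> labels w"
      have "ps (map g w) (f l) = ps w l" using ps_map[OF key[OF l]] .
      then show "monom (snd K' (f l)) ((ps (map g w) (f l) + 1) mod 2) = monom (snd K l) ((ps w l + 1) mod 2)"
        using f(3) l unfolding w_def by simp
    qed
    finally show ?thesis unfolding G_def by simp
  qed
  ultimately show ?thesis by (simp add: w_def)
qed


lemma swap_exact:
  "ps (xs @ [a2, a1] @ ys) c + (if fst a2 = c then 1 else 0) = ps (xs @ [a1, a2] @ ys) c + (if fst a1 = c then 1 else 0)"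
  by (simp add: ps_append algebra_simps)

lemma gen1: "(a::nat) + e2 = b + e1 \<Longrightarrow> (a + k) mod 2 = (b + (e1 + e2) + k) mod 2"
proof -
  assume h: "a + e2 = b + e1"
  have eq: "b + (e1 + e2) + k = (a + k) + 2 * e2" using h by linarith
  show ?thesis unfolding eq by simp
qed

lemma swap_mod:
  assumes "length A = 2"
  shows "(ps (xs @ rev A @ ys) c + k) mod 2 = (ps (xs @ A @ ys) c + cnt c A + k) mod 2"
proof -
  obtain a1 a2 where A: "A = [a1, a2]" using assms by (auto simp: length_Suc_conv numeral_2_eq_2)
  define e1 where "e1 = (if fst a1 = c then 1 else 0::nat)"
  define e2 where "e2 = (if fst a2 = c then 1 else 0::nat)"
  have ex: "ps (xs @ rev A @ ys) c + e2 = ps (xs @ A @ ys) c + e1"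
    using swap_exact[of xs a2 a1 ys c] A unfolding e1_def e2_def by simp
  have cA: "cnt c A = e1 + e2" using A by (simp add: e1_def e2_def)
  show ?thesis using gen1[OF ex, of k] by (simp only: cA)
qed

lemma gen2: "even (E::nat) \<Longrightarrow> (a + E + 1) mod 2 = (a + 1) mod 2"
proof -
  assume "even E"
  then obtain m where "E = 2 * m" by blast
  then have eq: "a + E + 1 = (a + 1) + 2 * m" by simp
  show ?thesis unfolding eq by simp
qed

lemma R3_generic:
  assumes "length A = 2" "length B = 2" "length C = 2"
    and ev: "\<And>z. even (cnt z A + cnt z B + cnt z C)"
    and w: "w = p1 @ A @ p2 @ B @ p3 @ C @ p4"
    and w': "w' = p1 @ rev A @ p2 @ rev B @ p3 @ rev C @ p4"
  shows "(wf_gdiag (w, s) \<longleftrightarrow> wf_gdiag (w', s)) \<and> G w s = G w' s"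
proof
  show "wf_gdiag (w, s) \<longleftrightarrow> wf_gdiag (w', s)"
    unfolding wf_gdiag_def w w' by simp
next
  have lab: "labels w' = labels w" unfolding w w' by simp
  show "G w s = G w' s"
    unfolding G_def lab
  proof (intro sum.cong refl)
    fix z
    have s1: "(ps w' z + 1) mod 2 = (ps (p1 @ A @ p2 @ rev B @ p3 @ rev C @ p4) z + cnt z A + 1) mod 2"
      using swap_mod[OF assms(1), of p1 "p2 @ rev B @ p3 @ rev C @ p4" z "1"] unfolding w' by simp
    also have "\<dots> = (ps (p1 @ A @ p2 @ B @ p3 @ rev C @ p4) z + cnt z B + cnt z A + 1) mod 2"
      using swap_mod[OF assms(2), of "p1 @ A @ p2" "p3 @ rev C @ p4" z "cnt z A + 1"] by (simp add: add.assoc)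
    also have "\<dots> = (ps w z + cnt z C + cnt z B + cnt z A + 1) mod 2"
      using swap_mod[OF assms(3), of "p1 @ A @ p2 @ B @ p3" p4 z "cnt z B + cnt z A + 1"]
      unfolding w by (simp add: add.assoc)
    also have "\<dots> = (ps w z + (cnt z A + cnt z B + cnt z C) + 1) mod 2" by (simp add: ac_simps)
    also have "\<dots> = (ps w z + 1) mod 2"
      using gen2[OF ev[of z], of "ps w z"] by (simp add: add.assoc)
    finally show "monom (s z) ((ps w z + 1) mod 2) = monom (s z) ((ps w' z + 1) mod 2)" by simp
  qed
qed

lemma R3_config_facts:
  assumes "R3_config s a b c PT PM PB" "a \<noteq> b" "a \<noteq> c" "b \<noteq> c"
  shows "length PT = 2" "length PM = 2" "length PB = 2"
    "\<And>z. even (cnt z PT + cnt z PM + cnt z PB)"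
proof -
  have d: "PT = [(a, True), (b, True)] \<or> PT = [(b, True), (a, True)]"
     "PM = [(a, False), (c, True)] \<or> PM = [(c, True), (a, False)]"
     "PB = [(b, False), (c, False)] \<or> PB = [(c, False), (b, False)]"
    using assms(1) unfolding R3_config_def by blast+
  show "length PT = 2" "length PM = 2" "length PB = 2" using d by auto
  fix z
  define ea where "ea = (if a = z then 1 else 0::nat)"
  define eb where "eb = (if b = z then 1 else 0::nat)"
  define ec where "ec = (if c = z then 1 else 0::nat)"
  have "cnt z PT = ea + eb" using d(1) unfolding ea_def eb_def by auto
  moreover have "cnt z PM = ea + ec" using d(2) unfolding ea_def ec_def by auto
  moreover have "cnt z PB = eb + ec" using d(3) unfolding eb_def ec_def by auto
  ultimately have "cnt z PT + cnt z PM + cnt z PB = 2 * (ea + eb + ec)" by simp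
  then show "even (cnt z PT + cnt z PM + cnt z PB)" by simp
qed

lemma R3_ok:
  assumes m: "R3_move K K'"
  shows "(wf_gdiag K \<longleftrightarrow> wf_gdiag K') \<and> G (fst K) (snd K) = G (fst K') (snd K')"
proof -
  obtain a b c PT PM PB p1 p2 p3 p4 where h: "a \<noteq> b" "a \<noteq> c" "b \<noteq> c"
    "R3_config (snd K) a b c PT PM PB" "snd K' = snd K"
    "(fst K = p1 @ PT @ p2 @ PM @ p3 @ PB @ p4 \<and>
        fst K' = p1 @ rev PT @ p2 @ rev PM @ p3 @ rev PB @ p4) \<or>
       (fst K = p1 @ PT @ p2 @ PB @ p3 @ PM @ p4 \<and>
        fst K' = p1 @ rev PT @ p2 @ rev PB @ p3 @ rev PM @ p4)"
    using m unfolding R3_move_def by blast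
  note f = R3_config_facts[OF h(4) h(1-3)]
  have K: "K = (fst K, snd K)" "K' = (fst K', snd K)" using h(5) by (simp_all add: prod_eq_iff)
  from h(6) show ?thesis
  proof
    assume e: "fst K = p1 @ PT @ p2 @ PM @ p3 @ PB @ p4 \<and>
        fst K' = p1 @ rev PT @ p2 @ rev PM @ p3 @ rev PB @ p4"
    show ?thesis using R3_generic[OF f(1) f(2) f(3) f(4) conjunct1[OF e] conjunct2[OF e], of "snd K"] K h(5)
      by metis
  next
    assume e: "fst K = p1 @ PT @ p2 @ PB @ p3 @ PM @ p4 \<and>
        fst K' = p1 @ rev PT @ p2 @ rev PB @ p3 @ rev PM @ p4"
    have ev: "\<And>z. even (cnt z PT + cnt z PB + cnt z PM)" using f(4) by (simp add: add.commute add.left_commute)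
    show ?thesis using R3_generic[OF f(1) f(3) f(2) ev conjunct1[OF e] conjunct2[OF e], of "snd K"] K h(5)
      by metis
  qed
qed


lemma filt_notin: "l \<notin> labels xs \<Longrightarrow> filter (\<lambda>z. z = (l, b)) xs = []"
  by (induction xs) auto

lemma R2_ok:
  assumes m: "R2_move K K'"
  shows "(wf_gdiag K \<longleftrightarrow> wf_gdiag K') \<and> G (fst K) (snd K) = G (fst K') (snd K')"
proof -
  obtain p q r x y where h: "x \<noteq> y" "x \<notin> labels (fst K)" "y \<notin> labels (fst K)" "fst K = p @ q @ r"
    "fst K' = p @ [(x, True), (y, True)] @ q @ [(x, False), (y, False)] @ r \<or>
     fst K' = p @ [(x, True), (y, True)] @ q @ [(y, False), (x, False)] @ r"
    "\<forall>l\<in>labels (fst K). snd K' l = snd K l" "snd K' x \<in> {1, -1}" "snd K' y = - snd K' x"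
    using m unfolding R2_move_def by blast
  define M where "M = (if fst K' = p @ [(x, True), (y, True)] @ q @ [(x, False), (y, False)] @ r
      then [(x, False), (y, False)] else [(y, False), (x, False)])"
  have w': "fst K' = p @ [(x, True), (y, True)] @ q @ M @ r" using h(5) M_def by auto
  have M: "M = [(x, False), (y, False)] \<or> M = [(y, False), (x, False)]" by (simp add: M_def)
  have nx: "x \<notin> labels p" "x \<notin> labels q" "x \<notin> labels r" using h(2,4) by auto
  have ny: "y \<notin> labels p" "y \<notin> labels q" "y \<notin> labels r" using h(3,4) by auto
  have lab': "labels (fst K') = insert x (insert y (labels (fst K)))" using w' M h(4) by auto
  have cntl: "length (filter (\<lambda>z. z = (l, b)) (fst K')) = length (filter (\<lambda>z. z = (l, b)) (fst K))"
    if "l \<in> labels (fst K)" for l b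
  proof -
    have "l \<noteq> x" "l \<noteq> y" using that h(2,3) by auto
    then show ?thesis using w' M h(4) by auto
  qed
  have cx: "length (filter (\<lambda>z. z = (x, b)) (fst K')) = 1" for b
    using w' M h(1) filt_notin[OF nx(1)] filt_notin[OF nx(2)] filt_notin[OF nx(3)] by auto
  have cy: "length (filter (\<lambda>z. z = (y, b)) (fst K')) = 1" for b
    using w' M h(1) filt_notin[OF ny(1)] filt_notin[OF ny(2)] filt_notin[OF ny(3)] by auto
  have sy: "snd K' y \<in> {1, -1}" using h(7,8) by auto
  have wf: "wf_gdiag K \<longleftrightarrow> wf_gdiag K'"
  proof
    assume wfK: "wf_gdiag K"
    show "wf_gdiag K'" unfolding wf_gdiag_def lab'
    proof (intro ballI)
      fix l assume l: "l \<in> insert x (insert y (labels (fst K)))"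
      show "length (filter (\<lambda>xa. xa = (l, True)) (fst K')) = 1 \<and>
          length (filter (\<lambda>xa. xa = (l, False)) (fst K')) = 1 \<and> snd K' l \<in> {1, - 1}"
      proof (cases "l \<in> labels (fst K)")
        case True then show ?thesis using wfK cntl h(6) unfolding wf_gdiag_def by auto
      next
        case False then have "l = x \<or> l = y" using l by auto
        then show ?thesis using cx cy h(7) sy by auto
      qed
    qed
  next
    assume wfK': "wf_gdiag K'"
    show "wf_gdiag K" unfolding wf_gdiag_def
    proof (intro ballI)
      fix l assume l: "l \<in> labels (fst K)"
      then have "l \<in> labels (fst K')" using lab' by auto
      then show "length (filter (\<lambda>xa. xa = (l, True)) (fst K)) = 1 \<and>
          length (filter (\<lambda>xa. xa = (l, False)) (fst K)) = 1 \<and> snd K l \<in> {1, - 1}"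
        using wfK' cntl[OF l] h(6) l unfolding wf_gdiag_def by metis
    qed
  qed
  have cz: "cnt x p = 0" "cnt x q = 0" "cnt x r = 0" "cnt y p = 0" "cnt y q = 0" "cnt y r = 0"
    using nx ny cnt_zero_iff by auto
  have pz: "ps p x = 0" "ps q x = 0" "ps r x = 0" "ps p y = 0" "ps q y = 0" "ps r y = 0"
    using cz ps_zero by auto
  have exy: "(ps (fst K') x + 1) mod 2 = (ps (fst K') y + 1) mod 2"
    using M
  proof
    assume "M = [(x, False), (y, False)]"
    then have "ps (fst K') x = 2 * length p + length q + 2" "ps (fst K') y = 2 * length p + length q + 4"
      using w' cz pz h(1) by (simp_all add: ps_append)
    then have e: "ps (fst K') x + 1 = 2 * (length p + 1) + (length q + 1)"
      "ps (fst K') y + 1 = 2 * (length p + 2) + (length q + 1)" by simp_all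
    show ?thesis unfolding e by simp
  next
    assume "M = [(y, False), (x, False)]"
    then have "ps (fst K') x = 2 * length p + length q + 3" "ps (fst K') y = 2 * length p + length q + 3"
      using w' cz pz h(1) by (simp_all add: ps_append)
    then show ?thesis by simp
  qed
  have rest: "(\<Sum>c\<in>labels (fst K). monom (snd K' c) ((ps (fst K') c + 1) mod 2)) = G (fst K) (snd K)"
    unfolding G_def
  proof (intro sum.cong refl)
    fix c assume c: "c \<in> labels (fst K)"
    then have cxy: "c \<noteq> x" "c \<noteq> y" using h(2,3) by auto
    have eq: "ps (fst K') c = ps (fst K) c + 2 * (cnt c q + cnt c r + cnt c r)"
      using M
    proof
      assume "M = [(x, False), (y, False)]"
      then show ?thesis using w' h(4) cxy by (simp add: ps_append algebra_simps)
    next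
      assume "M = [(y, False), (x, False)]"
      then show ?thesis using w' h(4) cxy by (simp add: ps_append algebra_simps)
    qed
    have eq2: "ps (fst K') c + 1 = (ps (fst K) c + 1) + 2 * (cnt c q + cnt c r + cnt c r)"
      using eq by simp
    have "(ps (fst K') c + 1) mod 2 = (ps (fst K) c + 1) mod 2"
      unfolding eq2 by (rule mod_mult_self2)
    then show "monom (snd K' c) ((ps (fst K') c + 1) mod 2) = monom (snd K c) ((ps (fst K) c + 1) mod 2)"
      using h(6) c by simp
  qed
  have "G (fst K') (snd K') = monom (snd K' x) ((ps (fst K') x + 1) mod 2) +
      (monom (snd K' y) ((ps (fst K') y + 1) mod 2) +
      (\<Sum>c\<in>labels (fst K). monom (snd K' c) ((ps (fst K') c + 1) mod 2)))"
    unfolding G_def lab' using h(1,2,3) by simp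
  also have "monom (snd K' x) ((ps (fst K') x + 1) mod 2) + monom (snd K' y) ((ps (fst K') y + 1) mod 2) = 0"
    unfolding exy h(8) add_monom by simp
  ultimately have "G (fst K') (snd K') = G (fst K) (snd K)" using rest by (simp add: add.assoc[symmetric])
  then show ?thesis using wf by simp
qed

lemma step_ok:
  assumes wf: "wf_gdiag K" and st: "no_R1_step K K'"
  shows "wf_gdiag K' \<and> gamma K = gamma K'"
proof -
  have "wf_gdiag K' \<and> G (fst K) (snd K) = G (fst K') (snd K')"
    using st wf rotate_ok relabel_ok R2_ok R3_ok unfolding no_R1_step_def by metis
  then show ?thesis using wf gamma_G by metis
qed

theorem mainTheorem1:
  fixes K K' :: gdiag
  assumes "wf_gdiag K"
    and "no_R1_step\<^sup>*\<^sup>* K K'"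
  shows "gamma K = gamma K' \<and> gammabar K = gammabar K'"
proof -
  have "wf_gdiag K' \<and> gamma K = gamma K'"
    using assms(2)
  proof (induction rule: rtranclp_induct)
    case base then show ?case using assms(1) by simp
  next
    case (step y z) then show ?case using step_ok by metis
  qed
  then show ?thesis by (simp add: gammabar_def)
qed

end
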